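(* Let $\mathcal F_d$ be a set of OPFs on $\mathbb C^d$ containing the unit OPF ${\bf u}$ and satisfying C1 and the Finiteness Principle, and let $\bar\Gamma^d$ be the associated representation of $\mathrm{SU}(d)$ on the real span $V_d$ of $\mathcal F_d$. Then $\bar\Gamma^d$ contains a unique trivial subrepresentation (the trivial representation occurs exactly once, spanned by ${\bf u}$).
   Context: An OPF on $\mathbb C^d$ is a function from rays of $\mathbb C^d$ to $[0,1]$; the unit OPF is ${\bf u}(\psi)=1$ for all $\psi$. (C1): for $F\in\mathcal F_d$, $U\in\mathrm{SU}(d)$, the function $F\circ U:\psi\mapsto F(U\psi)$ lies in $\mathcal F_d$. Finiteness: $V_d$, the real span of $\mathcal F_d$, is finite-dimensional. The associated representation $\bar\Gamma^d$ is defined on $V_d$ by $\bar\Gamma^d(U)F=F\circ U$, i.e. for a basis $F_i$, $F_i(U\psi)=\sum_j\bar\Gamma_i^{\,j}(U)F_j(\psi)$. *)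

theory Defs
  imports "HOL-Analysis.Analysis"
begin

definition ray :: "complex^'d \<Rightarrow> (complex^'d) set" where
  "ray \<psi> = {c *s \<psi> | c. c \<noteq> 0}"

definition rays :: "(complex^'d) set set" where
  "rays = {ray \<psi> | \<psi>. \<psi> \<noteq> 0}"

text \<open>Functions on rays are represented extensionally (value 0 off the set of rays).\<close>
definition is_OPF :: "((complex^'d) set \<Rightarrow> real) \<Rightarrow> bool" where
  "is_OPF F \<longleftrightarrow> (\<forall>L\<in>rays. 0 \<le> F L \<and> F L \<le> 1) \<and> (\<forall>L. L \<notin> rays \<longrightarrow> F L = 0)"

definition unitOPF :: "(complex^'d) set \<Rightarrow> real" where
  "unitOPF L = (if L \<in> rays then 1 else 0)"

definition cnj_transpose :: "complex^'d^'d \<Rightarrow> complex^'d^'d" where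
  "cnj_transpose U = (\<chi> i j. cnj (U $ j $ i))"

definition SU :: "(complex^'d^'d) set" where
  "SU = {U. U ** cnj_transpose U = mat 1 \<and> cnj_transpose U ** U = mat 1 \<and> det U = 1}"

definition act :: "((complex^'d) set \<Rightarrow> real) \<Rightarrow> complex^'d^'d \<Rightarrow> ((complex^'d) set \<Rightarrow> real)" where
  "act F U = (\<lambda>L. if L \<in> rays then F ((\<lambda>\<psi>. U *v \<psi>) ` L) else 0)"

definition rspan :: "('a \<Rightarrow> real) set \<Rightarrow> ('a \<Rightarrow> real) set" where
  "rspan S = {(\<lambda>x. \<Sum>f\<in>T. c f * f x) | T c. finite T \<and> T \<subseteq> S}"

definition C1 :: "((complex^'d) set \<Rightarrow> real) set \<Rightarrow> bool" where
  "C1 Fd \<longleftrightarrow> (\<forall>F\<in>Fd. \<forall>U\<in>SU. act F U \<in> Fd)"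

definition finiteness :: "('a \<Rightarrow> real) set \<Rightarrow> bool" where
  "finiteness Fd \<longleftrightarrow> (\<exists>B. finite B \<and> rspan Fd \<subseteq> rspan B)"

text \<open>Vectors of V_d fixed by the representation: the trivial isotypic component.\<close>
definition trivial_part :: "((complex^'d) set \<Rightarrow> real) set \<Rightarrow> ((complex^'d) set \<Rightarrow> real) set" where
  "trivial_part Fd = {F \<in> rspan Fd. \<forall>U\<in>SU. act F U = F}"

end

theory Submission
  imports Defs
begin

definition hp :: "complex^'d \<Rightarrow> complex^'d \<Rightarrow> complex" where
  "hp x y = (\<Sum>i\<in>UNIV. cnj (x$i) * y$i)"

lemma hp_diff_r: "hp x (y - z) = hp x y - hp x z"
  by (simp add: hp_def algebra_simps sum_subtractf)
lemma hp_diff_l: "hp (x - y) z = hp x z - hp y z"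
  by (simp add: hp_def algebra_simps sum_subtractf)
lemma hp_smult_r: "hp x (k *s y) = k * hp x y"
  by (simp add: hp_def sum_distrib_left algebra_simps)
lemma hp_smult_l: "hp (k *s x) y = cnj k * hp x y"
  by (simp add: hp_def sum_distrib_left algebra_simps)
lemma hp_cnj: "cnj (hp x y) = hp y x"
  by (simp add: hp_def mult.commute)
lemma hp_self: "hp x x = of_real (\<Sum>i\<in>UNIV. (cmod (x$i))^2)"
  unfolding hp_def of_real_sum by (rule sum.cong) (simp_all only: complex_norm_square mult.commute)
lemma hp_self_zero: "hp x x = 0 \<Longrightarrow> x = 0"
proof -
  assume "hp x x = 0"
  hence "(\<Sum>i\<in>UNIV. (cmod (x$i))^2) = 0" unfolding hp_self by (simp only: of_real_eq_0_iff)
  hence "\<forall>i\<in>UNIV. (cmod (x$i))^2 = 0" by (subst (asm) sum_nonneg_eq_0_iff) auto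
  thus "x = 0" by (simp add: vec_eq_iff)
qed
lemma hp_self_real: "cnj (hp x x) = hp x x"
  by (simp add: hp_cnj)

lemma delta_l: "(\<Sum>j\<in>UNIV. (if i = j then 1 else 0) * (f (j::'n::finite)::complex)) = f i"
proof -
  have "(\<Sum>j\<in>UNIV. (if i = j then 1 else 0) * f j) = (\<Sum>j\<in>UNIV. if i = j then f j else 0)" by (rule sum.cong) auto
  thus ?thesis by simp
qed
lemma delta_r: "(\<Sum>j\<in>UNIV. (f (j::'n::finite)::complex) * (if j = i then 1 else 0)) = f i"
proof -
  have "(\<Sum>j\<in>UNIV. f j * (if j = i then 1 else 0)) = (\<Sum>j\<in>UNIV. if j = i then f j else 0)" by (rule sum.cong) auto
  thus ?thesis by simp
qed

definition hh :: "complex^'d \<Rightarrow> complex^'d^'d" where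
  "hh v = (\<chi> i j. (if i = j then 1 else 0) - (2 / hp v v) * v$i * cnj (v$j))"

lemma hh_mult: "hh v *v x = x - ((2 / hp v v) * hp v x) *s v"
proof -
  have "(hh v *v x) $ i = (x - ((2 / hp v v) * hp v x) *s v) $ i" for i
  proof -
    have "(hh v *v x) $ i = (\<Sum>j\<in>UNIV. (if i = j then 1 else 0) * x$j) - (\<Sum>j\<in>UNIV. (2 / hp v v) * v$i * cnj (v$j) * x$j)"
      by (simp add: hh_def matrix_vector_mult_def algebra_simps sum_subtractf)
    also have "(\<Sum>j\<in>UNIV. (2 / hp v v) * v$i * cnj (v$j) * x$j) = (2 / hp v v) * hp v x * v$i"
      by (simp add: hp_def sum_distrib_left algebra_simps sum_divide_distrib)
    finally show ?thesis by (simp add: delta_l)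
  qed
  thus ?thesis by (simp add: vec_eq_iff)
qed

lemma hh_herm: "cnj_transpose (hh v) = hh v"
proof -
  have "cnj (2 / hp v v) = 2 / hp v v" using hp_self_real[of v] by simp
  thus ?thesis by (simp add: cnj_transpose_def hh_def vec_eq_iff mult.commute mult.left_commute)
qed

lemma hh_sq: assumes "v \<noteq> 0" shows "hh v ** hh v = mat 1"
proof -
  define a where "a = 2 / hp v v"
  have N: "hp v v \<noteq> 0" using assms hp_self_zero by blast
  have key: "a * a * hp v v = 2 * a" using N by (simp add: a_def field_simps)
  have key2: "a * hp v v = 2" using N by (simp add: a_def field_simps)
  have "(hh v ** hh v) $ i $ j = mat 1 $ i $ j" for i j
  proof -
    have "(hh v ** hh v) $ i $ j = (\<Sum>k\<in>UNIV. ((if i = k then 1 else 0) - a * v$i * cnj (v$k)) *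
         ((if k = j then 1 else 0) - a * v$k * cnj (v$j)))"
      by (simp add: matrix_matrix_mult_def hh_def a_def)
    also have "\<dots> = (\<Sum>k\<in>UNIV. (if i = k then 1 else 0) * (if k = j then 1 else 0))
        - (\<Sum>k\<in>UNIV. (if i = k then 1 else 0) * (a * v$k * cnj (v$j)))
        - (\<Sum>k\<in>UNIV. (a * v$i * cnj (v$k)) * (if k = j then 1 else 0))
        + (\<Sum>k\<in>UNIV. (a * v$i * cnj (v$k)) * (a * v$k * cnj (v$j)))"
      by (simp add: algebra_simps sum.distrib sum_subtractf)
    also have "(\<Sum>k\<in>UNIV. (a * v$i * cnj (v$k)) * (a * v$k * cnj (v$j)))
       = a * a * v$i * cnj (v$j) * hp v v"
      by (simp add: hp_def sum_distrib_left mult.commute mult.left_commute)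
    also have "\<dots> = (a * a * hp v v) * (v$i * cnj (v$j))" by (simp add: ac_simps)
    also have "\<dots> = 2 * a * v$i * cnj (v$j)" unfolding key by (simp add: ac_simps)
    also have "(\<Sum>k\<in>UNIV. (if i = k then 1 else 0) * (if k = j then 1 else 0)) = (if i = j then 1 else (0::complex))"
      by (rule delta_l)
    also have "(\<Sum>k\<in>UNIV. (if i = k then 1 else 0) * (a * v$k * cnj (v$j))) = a * v$i * cnj (v$j)"
      by (rule delta_l)
    also have "(\<Sum>k\<in>UNIV. (a * v$i * cnj (v$k)) * (if k = j then 1 else 0)) = a * v$i * cnj (v$j)"
      by (rule delta_r)
    finally show ?thesis by (simp add: mat_def)
  qed
  thus ?thesis by (simp add: vec_eq_iff)
qed

lemma mv_smult: "(A::complex^'n^'m) *v (c *s x) = c *s (A *v x)"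
  by (simp add: vec_eq_iff matrix_vector_mult_def sum_distrib_left ac_simps)

lemma hh_maps:
  assumes "hp x x = hp y y" "cnj (hp y x) = hp y x" "x \<noteq> y"
  shows "hh (x - y) *v x = y"
proof -
  define v where "v = x - y"
  have v0: "v \<noteq> 0" using assms(3) by (simp add: v_def)
  hence N: "hp v v \<noteq> 0" using hp_self_zero by blast
  have xy: "hp x y = hp y x" using assms(2) hp_cnj[of y x] by simp
  have "hp v v = 2 * hp v x"
    unfolding v_def hp_diff_l hp_diff_r using assms(1) xy by simp
  hence "(2 / hp v v) * hp v x = 1" using N by (simp add: field_simps)
  hence "hh v *v x = x - v" by (simp add: hh_mult)
  thus ?thesis by (simp add: v_def)
qed

lemma ex_intro: "U ** cnj_transpose U = mat 1 \<Longrightarrow> cnj_transpose U ** U = mat 1 \<Longrightarrow> c \<noteq> 0 \<Longrightarrow> U *v \<psi> = c *s \<phi>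
  \<Longrightarrow> \<exists>U c. U ** cnj_transpose U = mat 1 \<and> cnj_transpose U ** U = mat 1 \<and> c \<noteq> 0 \<and> U *v \<psi> = c *s \<phi>"
  by blast

lemma exists_unitary:
  fixes \<psi> \<phi> :: "complex^'d"
  assumes "\<psi> \<noteq> 0" "\<phi> \<noteq> 0"
  shows "\<exists>U c. U ** cnj_transpose U = mat 1 \<and> cnj_transpose U ** U = mat 1 \<and> c \<noteq> 0 \<and> U *v \<psi> = c *s \<phi>"
proof -
  define p where "p = (\<Sum>i\<in>UNIV. (cmod (\<psi>$i))^2)"
  define q where "q = (\<Sum>i\<in>UNIV. (cmod (\<phi>$i))^2)"
  have hpp: "hp \<psi> \<psi> = of_real p" by (simp add: p_def hp_self)
  have hpq: "hp \<phi> \<phi> = of_real q" by (simp add: q_def hp_self)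
  have p0: "p \<noteq> 0" using assms(1) hp_self_zero hpp by force
  have q0: "q \<noteq> 0" using assms(2) hp_self_zero hpq by force
  have pp: "p > 0" using p0 unfolding p_def by (metis less_eq_real_def sum_nonneg zero_le_power2)
  have qp: "q > 0" using q0 unfolding q_def by (metis less_eq_real_def sum_nonneg zero_le_power2)
  define s where "s = hp \<phi> \<psi>"
  define k0 where "k0 = (if s = 0 then 1 else cnj s / of_real (cmod s))"
  define r where "r = sqrt (q / p)"
  define k where "k = k0 * of_real r"
  have r2: "r * r = q / p" using pp qp by (simp add: r_def)
  have rp: "r > 0" using pp qp by (simp add: r_def)
  have k00: "cnj k0 * k0 = 1"
  proof (cases "s = 0")
    case True thus ?thesis by (simp add: k0_def)
  next
    case False
    have "cnj k0 * k0 = (s * cnj s) / of_real (cmod s * cmod s)" using False by (simp add: k0_def)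
    also have "s * cnj s = of_real (cmod s * cmod s)" by (metis complex_norm_square power2_eq_square)
    finally show ?thesis using False by simp
  qed
  have k0n: "k0 \<noteq> 0" using k00 by auto
  have kn: "k \<noteq> 0" using k0n rp by (simp add: k_def)
  define \<psi>' where "\<psi>' = k *s \<psi>"
  have e1: "hp \<psi>' \<psi>' = hp \<phi> \<phi>"
  proof -
    have "hp \<psi>' \<psi>' = (cnj k0 * k0) * of_real (r * r) * hp \<psi> \<psi>"
      by (simp add: \<psi>'_def hp_smult_l hp_smult_r k_def ac_simps)
    also have "\<dots> = of_real q" using k00 r2 hpp p0 by simp
    finally show ?thesis using hpq by simp
  qed
  have e2: "cnj (hp \<phi> \<psi>') = hp \<phi> \<psi>'"
  proof (cases "s = 0")
    case True thus ?thesis by (simp add: \<psi>'_def hp_smult_r s_def[symmetric])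
  next
    case False
    have "hp \<phi> \<psi>' = (s * cnj s) / of_real (cmod s) * of_real r"
      using False by (simp add: \<psi>'_def hp_smult_r s_def[symmetric] k_def k0_def)
    also have "s * cnj s = of_real (cmod s * cmod s)" by (metis complex_norm_square power2_eq_square)
    finally have "hp \<phi> \<psi>' = of_real (cmod s * cmod s / cmod s * r)" by simp
    thus ?thesis by (metis complex_cnj_complex_of_real)
  qed
  have eq\<psi>: "\<psi> = (1 / k) *s \<psi>'" using kn by (simp add: \<psi>'_def)
  show ?thesis
  proof (cases "\<psi>' = \<phi>")
    case True
    have ct: "cnj_transpose (mat 1 :: complex^'d^'d) = mat 1"
      by (simp add: cnj_transpose_def mat_def vec_eq_iff)
    have f4: "(mat 1 :: complex^'d^'d) *v \<psi> = (1 / k) *s \<phi>" using True eq\<psi> by simp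
    have f1: "mat 1 ** cnj_transpose (mat 1 :: complex^'d^'d) = mat 1"
      unfolding ct by (rule matrix_mul_lid)
    have f2: "cnj_transpose (mat 1 :: complex^'d^'d) ** mat 1 = mat 1"
      unfolding ct by (rule matrix_mul_lid)
    have f3: "1 / k \<noteq> 0" using kn by simp
    show ?thesis by (rule ex_intro[OF f1 f2 f3 f4])
  next
    case False
    define U where "U = hh (\<psi>' - \<phi>)"
    have v0: "\<psi>' - \<phi> \<noteq> 0" using False by simp
    have "U *v \<psi>' = \<phi>" unfolding U_def by (rule hh_maps[OF e1 e2 False])
    hence g4: "U *v \<psi> = (1 / k) *s \<phi>" using eq\<psi> by (simp add: mv_smult)
    have g1: "U ** cnj_transpose U = mat 1" and g2: "cnj_transpose U ** U = mat 1"
      using hh_sq[OF v0] by (simp_all add: U_def hh_herm)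
    have g3: "1 / k \<noteq> 0" using kn by simp
    show ?thesis by (rule ex_intro[OF g1 g2 g3 g4])
  qed
qed


lemma det_cnj_transpose: "det (cnj_transpose U) = cnj (det (U::complex^'d^'d))"
proof -
  have "cnj_transpose U = transpose (\<chi> i j. cnj (U$i$j))"
    by (simp add: cnj_transpose_def transpose_def)
  hence "det (cnj_transpose U) = det (\<chi> i j. cnj (U$i$j))" by simp
  also have "\<dots> = cnj (det U)" by (simp add: det_def)
  finally show ?thesis .
qed

definition scl :: "complex \<Rightarrow> complex^'d^'d \<Rightarrow> complex^'d^'d" where
  "scl m U = (\<chi> i j. m * U$i$j)"

lemma scl_unitary1: "scl m U ** cnj_transpose (scl m U) = scl (m * cnj m) (U ** cnj_transpose U)"
  by (simp add: vec_eq_iff scl_def cnj_transpose_def matrix_matrix_mult_def sum_distrib_left ac_simps)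
lemma scl_unitary2: "cnj_transpose (scl m U) ** scl m U = scl (m * cnj m) (cnj_transpose U ** U)"
  by (simp add: vec_eq_iff scl_def cnj_transpose_def matrix_matrix_mult_def sum_distrib_left ac_simps)
lemma scl_one: "scl 1 X = X" by (simp add: scl_def vec_eq_iff)
lemma scl_mat: "scl m U = mat m ** U"
proof -
  have "(mat m ** U) $ i $ j = m * U$i$j" for i j
  proof -
    have "(mat m ** U) $ i $ j = (\<Sum>k\<in>UNIV. (if i = k then 1 else 0) * (m * U$k$j))"
      by (simp add: matrix_matrix_mult_def mat_def) (rule sum.cong, auto)
    thus ?thesis by (simp add: delta_l)
  qed
  thus ?thesis by (simp add: vec_eq_iff scl_def)
qed
lemma det_scl: "det (scl m (U::complex^'d^'d)) = m ^ CARD('d) * det U"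
proof -
  have "det (mat m :: complex^'d^'d) = m ^ CARD('d)"
    by (subst det_diagonal) (simp_all add: mat_def)
  thus ?thesis by (simp add: scl_mat det_mul)
qed
lemma scl_mv: "scl m U *v x = m *s (U *v x)"
  by (simp add: vec_eq_iff scl_def matrix_vector_mult_def sum_distrib_left ac_simps)

lemma ex_intro2: "U \<in> SU \<Longrightarrow> c \<noteq> 0 \<Longrightarrow> U *v \<psi> = c *s \<phi> \<Longrightarrow> \<exists>U\<in>SU. \<exists>c. c \<noteq> 0 \<and> U *v \<psi> = c *s \<phi>"
  by blast

lemma SU_trans:
  fixes \<psi> \<phi> :: "complex^'d"
  assumes "\<psi> \<noteq> 0" "\<phi> \<noteq> 0"
  shows "\<exists>U\<in>SU. \<exists>c. c \<noteq> 0 \<and> U *v \<psi> = c *s \<phi>"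
proof -
  obtain U c where U1: "U ** cnj_transpose U = mat 1" and U2: "cnj_transpose U ** U = mat 1"
    and c0: "c \<noteq> 0" and Uc: "U *v \<psi> = c *s \<phi>"
    using exists_unitary[OF assms] by blast
  define D where "D = det U"
  have "D * cnj D = 1" using arg_cong[OF U1, of det] by (simp add: det_mul det_cnj_transpose D_def)
  hence "(cmod D)^2 = 1" using complex_mod_mult_cnj[of D] by simp
  hence nD: "cmod D = 1" using norm_ge_zero[of D] by (simp add: power2_eq_1_iff)
  define t where "t = Arg D"
  have Dc: "D = cis t" using rcis_cmod_Arg[of D] nD by (simp add: t_def rcis_def)
  define n where "n = CARD('d)"
  have n0: "n > 0" by (simp add: n_def)
  define m where "m = cis (- t / real n)"
  have "m ^ n = cis (real n * (- t / real n))" unfolding m_def by (rule Complex.DeMoivre)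
  also have "real n * (- t / real n) = - t" using n0 by simp
  finally have mn: "m ^ n * D = 1" by (simp add: Dc cis_mult)
  have mm: "m * cnj m = 1" by (simp add: m_def cis_cnj cis_mult)
  have h1: "scl m U \<in> SU"
    unfolding SU_def using U1 U2 mm mn
    by (simp add: scl_unitary1 scl_unitary2 det_scl n_def D_def scl_one)
  have h3: "scl m U *v \<psi> = (m * c) *s \<phi>" by (simp add: scl_mv Uc)
  have h2: "m * c \<noteq> 0" using c0 mm by auto
  show ?thesis by (rule ex_intro2[OF h1 h2 h3])
qed


lemma smult_smult: "d *s (c *s (x::complex^'d)) = (d * c) *s x"
  by (simp add: vec_eq_iff)

lemma ray_smult: assumes "c \<noteq> 0" shows "ray (c *s \<phi>) = ray (\<phi>::complex^'d)"
proof
  show "ray (c *s \<phi>) \<subseteq> ray \<phi>" unfolding ray_def using assms by (auto simp: smult_smult)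
  show "ray \<phi> \<subseteq> ray (c *s \<phi>)" unfolding ray_def
  proof (clarify)
    fix d :: complex assume "d \<noteq> 0"
    hence "d *s \<phi> = (d / c) *s (c *s \<phi>) \<and> d / c \<noteq> 0" using assms by (simp add: smult_smult)
    thus "\<exists>e. d *s \<phi> = e *s (c *s \<phi>) \<and> e \<noteq> 0" by blast
  qed
qed

lemma SU_nz: assumes "U \<in> SU" "(\<psi>::complex^'d) \<noteq> 0" shows "U *v \<psi> \<noteq> 0"
proof
  assume "U *v \<psi> = 0"
  hence "cnj_transpose U *v (U *v \<psi>) = 0" by simp
  hence "(cnj_transpose U ** U) *v \<psi> = 0" by (simp add: matrix_vector_mul_assoc)
  thus False using assms by (simp add: SU_def)
qed

lemma ray_image: "(\<lambda>x. U *v x) ` ray \<psi> = ray (U *v (\<psi>::complex^'d))"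
  unfolding ray_def
proof (auto simp: mv_smult)
  fix c :: complex assume "c \<noteq> 0"
  thus "c *s (U *v \<psi>) \<in> (*v) U ` {c *s \<psi> |c. c \<noteq> 0}"
    by (intro image_eqI[of _ _ "c *s \<psi>"]) (auto simp: mv_smult)
qed

lemma rays_image: assumes "U \<in> SU" "L \<in> rays" shows "(\<lambda>x. U *v x) ` L \<in> (rays :: (complex^'d) set set)"
proof -
  obtain \<psi> :: "complex^'d" where "\<psi> \<noteq> 0" "L = ray \<psi>" using assms(2) by (auto simp: rays_def)
  thus ?thesis using SU_nz[OF assms(1)] by (auto simp: rays_def ray_image)
qed

lemma rspan_vanish: assumes "\<forall>F\<in>Fd. is_OPF F" "F \<in> rspan Fd" "L \<notin> rays" shows "F L = 0"
proof -
  obtain T c where "finite T" "T \<subseteq> Fd" "F = (\<lambda>x. \<Sum>f\<in>T. c f * f x)"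
    using assms(2) unfolding rspan_def by blast
  moreover have "\<forall>f\<in>T. f L = 0" using assms(1,3) calculation(2) unfolding is_OPF_def by blast
  ultimately show ?thesis by (auto intro!: sum.neutral)
qed

lemma nzvec: "((\<chi> i. 1) :: complex^'d) \<noteq> 0"
  by (simp add: vec_eq_iff)

theorem mainTheorem4:
  fixes Fd :: "((complex^'d) set \<Rightarrow> real) set"
  assumes "\<forall>F\<in>Fd. is_OPF F"
    and "unitOPF \<in> Fd"
    and "C1 Fd"
    and "finiteness Fd"
  shows "trivial_part Fd = {(\<lambda>L. c * unitOPF L) | c. True} \<and> (unitOPF :: (complex^'d) set \<Rightarrow> real) \<noteq> (\<lambda>L. 0)"
proof
  define e where "e = ((\<chi> i. 1) :: complex^'d)"
  have e0: "e \<noteq> 0" using nzvec by (simp add: e_def)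
  have er: "ray e \<in> rays" using e0 by (auto simp: rays_def)
  show "(unitOPF :: (complex^'d) set \<Rightarrow> real) \<noteq> (\<lambda>L. 0)"
  proof
    assume "(unitOPF :: (complex^'d) set \<Rightarrow> real) = (\<lambda>L. 0)"
    hence "unitOPF (ray e) = 0" by (rule fun_cong)
    thus False using er by (simp add: unitOPF_def)
  qed
  show "trivial_part Fd = {(\<lambda>L. c * unitOPF L) | c. True}"
  proof
    show "trivial_part Fd \<subseteq> {(\<lambda>L. c * unitOPF L) | c. True}"
    proof
      fix F assume "F \<in> trivial_part Fd"
      hence Fs: "F \<in> rspan Fd" and Fi: "\<forall>U\<in>SU. act F U = F" by (auto simp: trivial_part_def)
      have "F L = F (ray e) * unitOPF L" for L
      proof (cases "L \<in> rays")
        case False thus ?thesis using rspan_vanish[OF assms(1) Fs False] by (simp add: unitOPF_def)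
      next
        case True
        then obtain \<psi> :: "complex^'d" where p0: "\<psi> \<noteq> 0" and L: "L = ray \<psi>" by (auto simp: rays_def)
        obtain U c where U: "U \<in> SU" and c0: "c \<noteq> 0" and Uc: "U *v \<psi> = c *s e"
          using SU_trans[OF p0 e0] by blast
        have "F L = act F U L" using Fi U by simp
        also have "\<dots> = F ((\<lambda>x. U *v x) ` L)" using True by (simp add: act_def)
        also have "(\<lambda>x. U *v x) ` L = ray e" by (simp add: L ray_image Uc ray_smult[OF c0])
        finally show ?thesis using True by (simp add: unitOPF_def)
      qed
      hence "F = (\<lambda>L. F (ray e) * unitOPF L)" by blast
      thus "F \<in> {(\<lambda>L. c * unitOPF L) | c. True}" by blast
    qed
    show "{(\<lambda>L. c * unitOPF L) | c. True} \<subseteq> trivial_part Fd"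
    proof clarify
      fix c :: real
      have "\<exists>T cc. (\<lambda>L. c * unitOPF L) = (\<lambda>x. \<Sum>f\<in>T. cc f * f x) \<and> finite T \<and> T \<subseteq> Fd"
        apply (rule exI[of _ "{unitOPF}"])
        apply (rule exI[of _ "\<lambda>_. c"])
        using assms(2) by simp
      hence "(\<lambda>L. c * unitOPF L) \<in> rspan Fd" unfolding rspan_def by blast
      moreover have "act (\<lambda>L. c * unitOPF L) U = (\<lambda>L. c * unitOPF L)" if "U \<in> SU" for U :: "complex^'d^'d"
        using rays_image[OF that] by (auto simp: act_def unitOPF_def)
      ultimately show "(\<lambda>L. c * unitOPF L) \<in> trivial_part Fd" by (simp add: trivial_part_def)
    qed
  qed
qed

end
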